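(* Consider any execution of Phase 1 of COOL. Let $\boldsymbol M_1,\dots,\boldsymbol M_\eta$ be the distinct initial messages held by honest processors, ordered so that $\boldsymbol M_1,\dots,\boldsymbol M_{\eta^{[1]}}$ are exactly those held by at least one honest processor $i$ with $s^{[1]}_i=1$. For $l\in[1:\eta]$ let $\mathcal A_l=\{i \text{ honest}: \boldsymbol w_i=\boldsymbol M_l\}$ and $\mathcal A^{[1]}_l=\{i\in\mathcal A_l: s^{[1]}_i=1\}$, and for $j\ne l$ let $\mathcal A_{l,j}=\{i\in\mathcal A_l: \boldsymbol h_i^{\mathsf T}\boldsymbol M_l=\boldsymbol h_i^{\mathsf T}\boldsymbol M_j\}$ and $\mathcal A^{[1]}_{l,j}=\{i\in\mathcal A^{[1]}_l: \boldsymbol h_i^{\mathsf T}\boldsymbol M_l=\boldsymbol h_i^{\mathsf T}\boldsymbol M_j\}$. If $\eta\ge\eta^{[1]}\ge 2$, then $|\mathcal A_{l,j}|+|\mathcal A_{j,l}|<k$ for all $j\ne l$, $j,l\in[1:\eta]$, and $|\mathcal A^{[1]}_{l,j}|+|\mathcal A^{[1]}_{j,l}|<k$ for all $j\ne l$, $j,l\in[1:\eta^{[1]}]$.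
   Context: Setting. $n$ processors indexed by $[1:n]$, pairwise joined by reliable private synchronous channels; recipients know senders. At most $t$ processors are dishonest (controlled arbitrarily by an adversary; missing values replaced by a fixed default); the others are honest. Processor $i$ holds an $\ell$-bit initial message $\boldsymbol w_i$. $\phi$ is a default value different from every $\ell$-bit message. Logarithms are base 2. Code. $k=\lfloor t/5\rfloor+1$, $c=\lceil \max\{\ell,(t/5+1)\log(n+1)\}/k\rceil$. Messages are zero-padded to $kc$ bits and viewed as vectors in $GF(2^c)^k$. Integers in $[1:n]$ are identified with distinct nonzero elements of $GF(2^c)$ (e.g. via binary representation, possible since $n\le 2^c-1$); $\boldsymbol h_i\in GF(2^c)^k$ has entries $h_{i,j}=\prod_{p\in[1:k],\,p\ne j}\frac{i-p}{j-p}$, $j\in[1:k]$, computed in $GF(2^c)$. Phase 1 of COOL (honest processor $i$): set $y^{(i)}_j:=\boldsymbol h_j^{\mathsf T}\boldsymbol w_i$ for $j\in[1:n]$ and $u_i(i):=1$; send $(y^{(i)}_j,y^{(i)}_i)$ to each $j\ne i$; for $j\ne i$ set $u_i(j):=1$ if the pair received from $j$ equals $(y^{(i)}_i,y^{(i)}_j)$ and $u_i(j):=0$ otherwise; the Phase-1 success indicator is $s^{[1]}_i:=1$ if $\sum_{j=1}^n u_i(j)\ge n-t$ and $s^{[1]}_i:=0$ otherwise. *)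

theory Defs
  imports Complex_Main
begin

definition cool_k :: "nat \<Rightarrow> nat" where
  "cool_k t = t div 5 + 1"

definition cool_c :: "nat \<Rightarrow> nat \<Rightarrow> nat \<Rightarrow> nat" where
  "cool_c n t ell = nat \<lceil> max (real ell) ((real t / 5 + 1) * log 2 (real n + 1)) / real (cool_k t) \<rceil>"

text \<open>Encoding of a bit string (message) as a vector in GF(2^c)^k, indexed by [1:k]:
  zero-pad to k*c bits, cut into k consecutive blocks of c bits, and map each block to a
  field element via the fixed bijection beta between c-bit strings and GF(2^c).\<close>

definition encode :: "(bool list \<Rightarrow> 'f) \<Rightarrow> nat \<Rightarrow> nat \<Rightarrow> bool list \<Rightarrow> nat \<Rightarrow> 'f" where
  "encode \<beta> c k w = (\<lambda>j. \<beta> (take c (drop ((j - 1) * c) (w @ replicate (k * c - length w) False))))"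

text \<open>Lagrange coefficient h_{i,j}; emb identifies integers with nonzero field elements.\<close>

definition hcoef :: "(nat \<Rightarrow> 'f::field) \<Rightarrow> nat \<Rightarrow> nat \<Rightarrow> nat \<Rightarrow> 'f" where
  "hcoef emb k i j = (\<Prod>p\<in>{1..k} - {j}. (emb i - emb p) / (emb j - emb p))"

definition hdot :: "(nat \<Rightarrow> 'f::field) \<Rightarrow> nat \<Rightarrow> nat \<Rightarrow> (nat \<Rightarrow> 'f) \<Rightarrow> 'f" where
  "hdot emb k i v = (\<Sum>j\<in>{1..k}. hcoef emb k i j * v j)"

text \<open>Phase 1 of COOL. w i is the initial message of processor i; recv i j is the pair
  processor i received from processor j.\<close>

definition y1 :: "(nat \<Rightarrow> 'f::field) \<Rightarrow> (bool list \<Rightarrow> 'f) \<Rightarrow> nat \<Rightarrow> nat \<Rightarrow> (nat \<Rightarrow> bool list)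
     \<Rightarrow> nat \<Rightarrow> nat \<Rightarrow> 'f" where
  "y1 emb \<beta> c k w i j = hdot emb k j (encode \<beta> c k (w i))"

definition u1 :: "(nat \<Rightarrow> 'f::field) \<Rightarrow> (bool list \<Rightarrow> 'f) \<Rightarrow> nat \<Rightarrow> nat \<Rightarrow> (nat \<Rightarrow> bool list)
     \<Rightarrow> (nat \<Rightarrow> nat \<Rightarrow> 'f \<times> 'f) \<Rightarrow> nat \<Rightarrow> nat \<Rightarrow> bool" where
  "u1 emb \<beta> c k w recv i j =
     (j = i \<or> recv i j = (y1 emb \<beta> c k w i i, y1 emb \<beta> c k w i j))"

definition s1 :: "nat \<Rightarrow> nat \<Rightarrow> (nat \<Rightarrow> 'f::field) \<Rightarrow> (bool list \<Rightarrow> 'f) \<Rightarrow> nat \<Rightarrow> nat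
     \<Rightarrow> (nat \<Rightarrow> bool list) \<Rightarrow> (nat \<Rightarrow> nat \<Rightarrow> 'f \<times> 'f) \<Rightarrow> nat \<Rightarrow> bool" where
  "s1 n t emb \<beta> c k w recv i =
     (card {j \<in> {1..n}. u1 emb \<beta> c k w recv i j} \<ge> n - t)"

end

theory Submission
  imports Defs "HOL-Computational_Algebra.Polynomial"
begin


definition Lp :: "(nat \<Rightarrow> 'f::field) \<Rightarrow> nat \<Rightarrow> nat \<Rightarrow> 'f poly" where
  "Lp emb k j = (\<Prod>p\<in>{1..k} - {j}. [: - emb p / (emb j - emb p), 1 / (emb j - emb p) :])"

lemma hcoef_poly: "hcoef emb k i j = poly (Lp emb k j) (emb i)"
  unfolding hcoef_def Lp_def poly_prod
  by (rule prod.cong) (auto simp: diff_divide_distrib)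

lemma deg_Lp: assumes jk: "j \<in> {1..k}" shows "degree (Lp emb k j) \<le> k - 1"
proof -
  have "degree (Lp emb k j) \<le> sum (degree \<circ> (\<lambda>p. [: - emb p / (emb j - emb p), 1 / (emb j - emb p) :])) ({1..k} - {j})"
    unfolding Lp_def by (rule degree_prod_sum_le) auto
  also have "\<dots> \<le> sum (\<lambda>_. 1) ({1..k} - {j})"
    by (rule sum_mono) auto
  also have "\<dots> \<le> k - 1"
    using jk by (auto simp: card_Diff_singleton)
  finally show ?thesis .
qed

lemma hcoef_diag:
  assumes inj: "inj_on emb {1..k}" and m: "m \<in> {1..k}" and j: "j \<in> {1..k}"
  shows "hcoef emb k m j = (if j = m then 1 else 0)"
proof (cases "j = m")
  case True
  have "hcoef emb k m j = 1" unfolding hcoef_def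
  proof (intro prod.neutral ballI)
    fix p assume "p \<in> {1..k} - {j}"
    then have "emb j \<noteq> emb p" using inj True m by (auto dest: inj_onD)
    then show "(emb m - emb p) / (emb j - emb p) = 1" using True by simp
  qed
  then show ?thesis using True by simp
next
  case False
  then have "m \<in> {1..k} - {j}" using m by auto
  then show ?thesis unfolding hcoef_def using False
    by (auto intro!: prod_zero bexI[of _ m])
qed

lemma hdot_diag:
  assumes inj: "inj_on emb {1..k}" and m: "m \<in> {1..k}"
  shows "hdot emb k m v = v m"
proof -
  have "hdot emb k m v = (\<Sum>j\<in>{1..k}. (if j = m then v j else 0))"
    unfolding hdot_def by (rule sum.cong) (auto simp: hcoef_diag[OF inj m])
  also have "\<dots> = v m" using m by simp
  finally show ?thesis .
qed

lemma hdot_diff: "hdot emb k i a - hdot emb k i b = hdot emb k i (\<lambda>j. a j - b j)"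
  unfolding hdot_def by (simp add: sum_subtractf[symmetric] algebra_simps)

lemma key_card:
  fixes emb :: "nat \<Rightarrow> 'f::field"
  assumes inj: "inj_on emb (S \<union> {1..k})" and fin: "finite S"
    and m: "m \<in> {1..k}" and dm: "d m \<noteq> 0"
    and roots: "\<forall>i\<in>S. hdot emb k i d = 0"
  shows "card S < k"
proof -
  define Q where "Q = (\<Sum>j\<in>{1..k}. smult (d j) (Lp emb k j))"
  have pQ: "poly Q (emb i) = hdot emb k i d" for i
    unfolding Q_def hdot_def poly_sum by (simp add: hcoef_poly mult.commute)
  have inj1: "inj_on emb {1..k}" using inj by (rule inj_on_subset) auto
  have "poly Q (emb m) = d m" using pQ hdot_diag[OF inj1 m] by simp
  then have Qnz: "Q \<noteq> 0" using dm by auto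
  have degQ: "degree Q \<le> k - 1"
    unfolding Q_def
  proof (rule degree_sum_le)
    fix p assume "p \<in> {1..k}"
    then show "degree (smult (d p) (Lp emb k p)) \<le> k - 1"
      by (rule order.trans[OF degree_smult_le deg_Lp])
  qed simp
  have "card S = card (emb ` S)"
    using inj by (intro card_image[symmetric]) (rule inj_on_subset, auto)
  also have "\<dots> \<le> card {x. poly Q x = 0}"
    by (rule card_mono[OF poly_roots_finite[OF Qnz]]) (use roots pQ in auto)
  also have "\<dots> \<le> degree Q" by (rule card_poly_roots_bound[OF Qnz])
  finally show ?thesis using degQ m by auto
qed

lemma encode_diff:
  assumes la: "length a = ell" and lb: "length b = ell" and le: "ell \<le> k * c"
    and ne: "a \<noteq> b" and binj: "inj_on \<beta> {xs. length xs = c}"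
  shows "\<exists>m\<in>{1..k}. encode \<beta> c k a m \<noteq> encode \<beta> c k b m"
proof (rule ccontr)
  assume "\<not> ?thesis"
  then have eq: "\<forall>m\<in>{1..k}. encode \<beta> c k a m = encode \<beta> c k b m" by blast
  define pa where "pa = a @ replicate (k * c - length a) False"
  define pb where "pb = b @ replicate (k * c - length b) False"
  have lpa: "length pa = k * c" and lpb: "length pb = k * c" using la lb le
    by (auto simp: pa_def pb_def)
  have blk: "take c (drop ((m - 1) * c) pa) = take c (drop ((m - 1) * c) pb)" if m: "m \<in> {1..k}" for m
  proof -
    have "(m - 1) * c + c \<le> k * c" using m
      by (metis Suc_diff_1 add.commute atLeastAtMost_iff less_eq_Suc_le mult_Suc mult_le_mono1 not_one_le_zero not_gr0)
    then have "length (take c (drop ((m - 1) * c) pa)) = c" "length (take c (drop ((m - 1) * c) pb)) = c"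
      using lpa lpb by auto
    moreover have "\<beta> (take c (drop ((m - 1) * c) pa)) = \<beta> (take c (drop ((m - 1) * c) pb))"
      using eq m by (simp only: encode_def pa_def pb_def)
    ultimately show ?thesis using binj by (auto dest: inj_onD)
  qed
  have "pa = pb"
  proof (rule nth_equalityI)
    show "length pa = length pb" using lpa lpb by simp
    fix x assume x: "x < length pa"
    then have cpos: "c > 0" using lpa by (cases c) auto
    define m where "m = x div c + 1"
    have xm: "x = (m - 1) * c + x mod c" unfolding m_def by simp
    have mk: "m \<in> {1..k}" using x lpa cpos unfolding m_def
      by (auto simp: less_mult_imp_div_less Suc_le_eq)
    have b1: "(m - 1) * c \<le> length pa" "(m - 1) * c \<le> length pb"
      using x xm lpa lpb by linarith+
    have "pa ! x = take c (drop ((m - 1) * c) pa) ! (x mod c)"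
      using cpos b1 by (subst xm) (simp add: nth_drop)
    moreover have "pb ! x = take c (drop ((m - 1) * c) pb) ! (x mod c)"
      using cpos b1 by (subst xm) (simp add: nth_drop)
    ultimately show "pa ! x = pb ! x" using blk[OF mk] by simp
  qed
  then have "take ell pa = take ell pb" by simp
  then show False using ne la lb by (simp add: pa_def pb_def)
qed

lemma ell_le: "ell \<le> cool_k t * cool_c n t ell"
proof -
  have kpos: "real (cool_k t) > 0" by (simp add: cool_k_def)
  have "real ell / real (cool_k t) \<le> max (real ell) ((real t / 5 + 1) * log 2 (real n + 1)) / real (cool_k t)"
    using kpos by (simp add: divide_right_mono)
  also have "\<dots> \<le> real (cool_c n t ell)" unfolding cool_c_def
    by linarith
  finally have "real ell \<le> real (cool_k t) * real (cool_c n t ell)"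
    using kpos by (simp add: field_simps)
  then show ?thesis by (metis of_nat_le_iff of_nat_mult)
qed

theorem lemma7:
  fixes n t ell :: nat
    and emb :: "nat \<Rightarrow> 'f::{field,finite}"
    and \<beta> :: "bool list \<Rightarrow> 'f"
    and H :: "nat set"
    and w :: "nat \<Rightarrow> bool list"
    and recv :: "nat \<Rightarrow> nat \<Rightarrow> 'f \<times> 'f"
    and M :: "nat \<Rightarrow> bool list"
    and \<eta> \<eta>1 :: nat
  assumes field_card: "card (UNIV :: 'f set) = 2 ^ cool_c n t ell"
    and beta_bij: "bij_betw \<beta> {xs. length xs = cool_c n t ell} UNIV"
    and emb_inj: "inj_on emb {1..max n (cool_k t)}"
    and emb_nz: "\<forall>i\<in>{1..max n (cool_k t)}. emb i \<noteq> 0"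
    and H_sub: "H \<subseteq> {1..n}"
    and few_dishonest: "card ({1..n} - H) \<le> t"
    and msg_len: "\<forall>i\<in>H. length (w i) = ell"
    and honest_send: "\<forall>i\<in>H. \<forall>j\<in>H. j \<noteq> i \<longrightarrow>
        recv i j = (y1 emb \<beta> (cool_c n t ell) (cool_k t) w j i,
                    y1 emb \<beta> (cool_c n t ell) (cool_k t) w j j)"
    and M_inj: "inj_on M {1..\<eta>}"
    and M_all: "M ` {1..\<eta>} = w ` H"
    and M_succ: "M ` {1..\<eta>1} =
        w ` {i \<in> H. s1 n t emb \<beta> (cool_c n t ell) (cool_k t) w recv i}"
    and eta_ge: "\<eta> \<ge> \<eta>1" "\<eta>1 \<ge> 2"
  shows
   "(let k = cool_k t; c = cool_c n t ell;
         A = (\<lambda>l. {i \<in> H. w i = M l});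
         A1 = (\<lambda>l. {i \<in> A l. s1 n t emb \<beta> c k w recv i});
         Alj = (\<lambda>l j. {i \<in> A l. hdot emb k i (encode \<beta> c k (M l))
                                   = hdot emb k i (encode \<beta> c k (M j))});
         A1lj = (\<lambda>l j. {i \<in> A1 l. hdot emb k i (encode \<beta> c k (M l))
                                   = hdot emb k i (encode \<beta> c k (M j))})
     in (\<forall>l\<in>{1..\<eta>}. \<forall>j\<in>{1..\<eta>}. j \<noteq> l \<longrightarrow> card (Alj l j) + card (Alj j l) < k)
      \<and> (\<forall>l\<in>{1..\<eta>1}. \<forall>j\<in>{1..\<eta>1}. j \<noteq> l \<longrightarrow> card (A1lj l j) + card (A1lj j l) < k))"
proof -
  define k where "k = cool_k t"
  define c where "c = cool_c n t ell"
  define A where "A = (\<lambda>l. {i \<in> H. w i = M l})"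
  define A1 where "A1 = (\<lambda>l. {i \<in> A l. s1 n t emb \<beta> c k w recv i})"
  define Alj where "Alj = (\<lambda>l j. {i \<in> A l. hdot emb k i (encode \<beta> c k (M l))
                                   = hdot emb k i (encode \<beta> c k (M j))})"
  define A1lj where "A1lj = (\<lambda>l j. {i \<in> A1 l. hdot emb k i (encode \<beta> c k (M l))
                                   = hdot emb k i (encode \<beta> c k (M j))})"
  have binj: "inj_on \<beta> {xs. length xs = c}" using beta_bij bij_betw_def c_def by blast
  have finH: "finite H" using H_sub finite_subset by blast
  have main: "card (Alj l j) + card (Alj j l) < k"
    if l: "l \<in> {1..\<eta>}" and j: "j \<in> {1..\<eta>}" and jl: "j \<noteq> l" for l j
  proof -
    have ne: "M l \<noteq> M j" using M_inj l j jl by (auto dest: inj_onD)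
    have lenM: "length (M x) = ell" if "x \<in> {1..\<eta>}" for x
      using M_all msg_len that by force
    obtain m where m: "m \<in> {1..k}"
      and dm: "encode \<beta> c k (M l) m \<noteq> encode \<beta> c k (M j) m"
      using encode_diff[OF lenM[OF l] lenM[OF j] _ ne binj] ell_le k_def c_def by blast
    define d where "d = (\<lambda>x. encode \<beta> c k (M l) x - encode \<beta> c k (M j) x)"
    define S where "S = Alj l j \<union> Alj j l"
    have SH: "S \<subseteq> H" unfolding S_def Alj_def A_def by auto
    have finS: "finite S" using SH finH finite_subset by blast
    have disj: "Alj l j \<inter> Alj j l = {}" unfolding Alj_def A_def using ne by auto
    have finl: "finite (Alj l j)" "finite (Alj j l)" using finS unfolding S_def by auto
    have cardS: "card S = card (Alj l j) + card (Alj j l)"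
      unfolding S_def using card_Un_disjoint[OF finl disj] .
    have "inj_on emb (S \<union> {1..k})"
    proof (rule inj_on_subset[OF emb_inj])
      have "S \<subseteq> {1..n}" using SH H_sub by blast
      moreover have "{1..n} \<union> {1..k} \<subseteq> {1..max n (cool_k t)}" unfolding k_def by auto
      ultimately show "S \<union> {1..k} \<subseteq> {1..max n (cool_k t)}" by blast
    qed
    moreover have "\<forall>i\<in>S. hdot emb k i d = 0"
      unfolding S_def Alj_def d_def by (auto simp: hdot_diff[symmetric])
    ultimately have "card S < k"
      using key_card[OF _ finS m, of emb d] dm d_def by auto
    then show ?thesis using cardS by simp
  qed
  have sub: "A1lj l j \<subseteq> Alj l j" for l j unfolding A1lj_def Alj_def A1_def by auto
  have finA: "finite (Alj l j)" for l j
    using finH unfolding Alj_def A_def by auto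
  have main1: "card (A1lj l j) + card (A1lj j l) < k"
    if l: "l \<in> {1..\<eta>1}" and j: "j \<in> {1..\<eta>1}" and jl: "j \<noteq> l" for l j
  proof -
    have "card (A1lj l j) + card (A1lj j l) \<le> card (Alj l j) + card (Alj j l)"
      using card_mono[OF finA sub] by (simp add: add_mono)
    also have "\<dots> < k" using main l j jl eta_ge by auto
    finally show ?thesis .
  qed
  show ?thesis unfolding Let_def
    using main main1 unfolding k_def c_def A_def A1_def Alj_def A1lj_def by blast
qed

end
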